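(* Let $\mathfrak{M}$ be a non-quasianalytic weight matrix of R-moderate growth. Then $\mathfrak{K}=\mathfrak{K}(\mathfrak{M})$ and $\mathfrak{Q}=\mathfrak{Q}(\mathfrak{M})$ are R-equivalent.
   Context: A weight sequence is $M=(M_k)_{k\ge0}$ with $M_k=\mu_0\cdots\mu_k$, $1=\mu_0\le\mu_1\le\cdots$, $\mu_k\to\infty$; non-quasianalytic if $\sum 1/\mu_k<\infty$. A weight matrix $\mathfrak{M}=\{M^{(\alpha)}:\alpha>0\}$ is a family of weight sequences with $M^{(\alpha)}\le M^{(\beta)}$ for $\alpha\le\beta$; non-quasianalytic if all members are; R-moderate growth: for every $M\in\mathfrak{M}$ there are $N\in\mathfrak{M}$, $C\ge1$ with $M_{j+k}\le C^{j+k}N_jN_k$. For positive sequences $M\preceq N$ means $\sup_{k\ge1}(M_k/N_k)^{1/k}<\infty$; families $\mathfrak{F},\mathfrak{G}$ are R-equivalent if every member of each is $\preceq$ some member of the other. $\omega_M(t)=\sup_k\log(t^kM_0/M_k)$, $\widetilde\omega_M(t)=\omega_M(t)+\log(1+t^2)$. For a non-quasianalytic pre-weight function $\omega$: $\kappa_\omega(t)=\int_1^\infty\omega(ts)s^{-2}ds$, $\varphi^*_\omega(x)=\sup_{y\ge0}(xy-\omega(e^y))$, and (extending $\omega$ evenly) $P_\omega(x+iy)=\frac{|y|}{\pi}\int_{-\infty}^\infty\frac{\omega(t)}{(x-t)^2+y^2}dt$ for $y\ne0$. Derived families: $\kappa_\alpha=\kappa_{\widetilde\omega_{M^{(\alpha)}}}$,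 $K^{(\alpha)}_j=\exp(\varphi^*_{\kappa_\alpha}(j))$ with $\kappa_\alpha$ replaced by an equivalent normalized (vanishing on $[0,1]$) function; $Q^{(\alpha)}_k=\sup_{r>0}r^{k+1/2}\exp(-\tfrac12P_{\widetilde\omega_{M^{(\alpha)}}}(ir))$; $\mathfrak{K}(\mathfrak{M})=\{K^{(\alpha)}\}$, $\mathfrak{Q}(\mathfrak{M})=\{Q^{(\alpha)}\}$. *)

theory Defs
  imports "HOL-Analysis.Analysis"
begin

definition weight_seq :: "(nat \<Rightarrow> real) \<Rightarrow> bool" where
  "weight_seq M \<longleftrightarrow> (\<exists>\<mu>::nat \<Rightarrow> real. \<mu> 0 = 1 \<and> mono \<mu> \<and> filterlim \<mu> at_top sequentially
      \<and> (\<forall>k. M k = (\<Prod>i\<le>k. \<mu> i)))"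

text \<open>Non-quasianalytic: sum of 1/mu k finite, where mu k = M k / M (k-1) for k >= 1
  (and 1/mu 0 = 1); equivalently the series of M k / M (k+1) converges.\<close>
definition nonquasianalytic_seq :: "(nat \<Rightarrow> real) \<Rightarrow> bool" where
  "nonquasianalytic_seq M \<longleftrightarrow> summable (\<lambda>k. M k / M (Suc k))"

definition weight_matrix :: "(real \<Rightarrow> nat \<Rightarrow> real) \<Rightarrow> bool" where
  "weight_matrix MM \<longleftrightarrow> (\<forall>\<alpha>>0. weight_seq (MM \<alpha>)) \<and>
      (\<forall>\<alpha> \<beta>. 0 < \<alpha> \<longrightarrow> \<alpha> \<le> \<beta> \<longrightarrow> (\<forall>k. MM \<alpha> k \<le> MM \<beta> k))"

definition nonquasianalytic_matrix :: "(real \<Rightarrow> nat \<Rightarrow> real) \<Rightarrow> bool" where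
  "nonquasianalytic_matrix MM \<longleftrightarrow> (\<forall>\<alpha>>0. nonquasianalytic_seq (MM \<alpha>))"

definition R_moderate_growth :: "(real \<Rightarrow> nat \<Rightarrow> real) \<Rightarrow> bool" where
  "R_moderate_growth MM \<longleftrightarrow> (\<forall>\<alpha>>0. \<exists>\<beta>>0. \<exists>C\<ge>1. \<forall>j k.
      MM \<alpha> (j + k) \<le> C ^ (j + k) * MM \<beta> j * MM \<beta> k)"

definition seq_preceq :: "(nat \<Rightarrow> real) \<Rightarrow> (nat \<Rightarrow> real) \<Rightarrow> bool" where
  "seq_preceq M N \<longleftrightarrow> bdd_above ((\<lambda>k. (M k / N k) powr (1 / real k)) ` {1..})"

definition R_equivalent :: "(real \<Rightarrow> nat \<Rightarrow> real) \<Rightarrow> (real \<Rightarrow> nat \<Rightarrow> real) \<Rightarrow> bool" where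
  "R_equivalent F G \<longleftrightarrow> (\<forall>\<alpha>>0. \<exists>\<beta>>0. seq_preceq (F \<alpha>) (G \<beta>)) \<and>
      (\<forall>\<alpha>>0. \<exists>\<beta>>0. seq_preceq (G \<alpha>) (F \<beta>))"

definition omega_M :: "(nat \<Rightarrow> real) \<Rightarrow> real \<Rightarrow> real" where
  "omega_M M t = ln (SUP k. t ^ k * M 0 / M k)"

definition omega_tilde :: "(nat \<Rightarrow> real) \<Rightarrow> real \<Rightarrow> real" where
  "omega_tilde M t = omega_M M t + ln (1 + t\<^sup>2)"

definition kappa :: "(real \<Rightarrow> real) \<Rightarrow> real \<Rightarrow> real" where
  "kappa \<omega> t = (LINT s:{1..}|lborel. \<omega> (t * s) / s\<^sup>2)"

definition normalize_wf :: "(real \<Rightarrow> real) \<Rightarrow> real \<Rightarrow> real" where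
  "normalize_wf \<omega> t = (if t \<le> 1 then 0 else \<omega> t - \<omega> 1)"

definition phi_star :: "(real \<Rightarrow> real) \<Rightarrow> real \<Rightarrow> real" where
  "phi_star \<omega> x = (SUP y\<in>{0..}. x * y - \<omega> (exp y))"

text \<open>Poisson integral of the even extension of omega at x + i y (y nonzero).\<close>
definition poissonP :: "(real \<Rightarrow> real) \<Rightarrow> real \<Rightarrow> real \<Rightarrow> real" where
  "poissonP \<omega> x y = \<bar>y\<bar> / pi * (LINT t|lborel. \<omega> \<bar>t\<bar> / ((x - t)\<^sup>2 + y\<^sup>2))"

definition K_family :: "(real \<Rightarrow> nat \<Rightarrow> real) \<Rightarrow> real \<Rightarrow> nat \<Rightarrow> real" where
  "K_family MM \<alpha> j = exp (phi_star (normalize_wf (kappa (omega_tilde (MM \<alpha>)))) (real j))"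

definition Q_family :: "(real \<Rightarrow> nat \<Rightarrow> real) \<Rightarrow> real \<Rightarrow> nat \<Rightarrow> real" where
  "Q_family MM \<alpha> k = (SUP r\<in>{0<..}. r powr (real k + 1/2) * exp (- poissonP (omega_tilde (MM \<alpha>)) 0 r / 2))"

end

theory Submission
  imports Defs
begin
lemma powr_tail_integral:
  fixes a e :: real
  assumes "e < -1" "a > 0"
  shows "integrable lborel (\<lambda>s. indicator {a..} s * s powr e)"
    and "(\<integral>s. indicator {a..} s * s powr e \<partial>lborel) = - (a powr (e+1)) / (e+1)"
proof -
  let ?f = "\<lambda>s::real. indicator {a..} s * s powr e"
  have hi: "((\<lambda>x. x powr e) has_integral -(a powr (e+1)) / (e+1)) {a..}"
    by (rule has_integral_powr_to_inf[OF assms])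
  have "(?f has_integral -(a powr (e+1)) / (e+1)) UNIV"
  proof -
    have eq: "?f = (\<lambda>x. if x \<in> {a..} then x powr e else 0)" by (auto simp: indicator_def fun_eq_iff)
    show ?thesis using hi by (simp only: eq has_integral_restrict_UNIV)
  qed
  moreover have m: "?f \<in> borel_measurable borel" by measurable
  moreover have nn: "\<And>x. 0 \<le> ?f x" by (auto simp: indicator_def)
  ultimately have N: "integral\<^sup>N lborel ?f = -(a powr (e+1)) / (e+1)"
    by (intro nn_integral_has_integral_lborel) auto
  have I0: "0 \<le> -(a powr (e+1)) / (e+1)" using assms by (simp add: divide_nonneg_neg)
  show "integrable lborel ?f"
    using m nn N by (intro integrableI_nn_integral_finite[where x="-(a powr (e+1)) / (e+1)"]) auto
  show "(\<integral>s. ?f s \<partial>lborel) = - (a powr (e+1)) / (e+1)"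
    using m nn N I0 by (subst integral_eq_nn_integral) auto
qed

definition lp :: "real \<Rightarrow> real" where "lp x = max 0 (ln x)"

lemma ln_le_2sqrt: assumes y: "y > 0" shows "ln y \<le> 2 * sqrt y"
proof -
  have "ln (sqrt y) \<le> sqrt y - 1" using ln_le_minus_one[of "sqrt y"] y by simp
  moreover have "ln y = 2 * ln (sqrt y)" using y by (simp add: ln_sqrt)
  ultimately show ?thesis by simp
qed

lemma lp_nonneg: "0 \<le> lp x" by (simp add: lp_def)

lemma lp_le: "x > 0 \<Longrightarrow> lp x \<le> x"
  using ln_le_minus_one[of x] by (simp add: lp_def)

locale nqa_seq =
  fixes M :: "nat \<Rightarrow> real" and \<mu> :: "nat \<Rightarrow> real"
  assumes mu0: "\<mu> 0 = 1" and mu_mono: "mono \<mu>" and mu_lim: "filterlim \<mu> at_top sequentially"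
    and M_prod: "\<And>k. M k = (\<Prod>i\<le>k. \<mu> i)"
    and nqa: "summable (\<lambda>k. M k / M (Suc k))"
begin

lemma mu_ge1: "1 \<le> \<mu> i" using mu_mono mu0 by (metis le0 monoD)
lemma mu_pos: "0 < \<mu> i" using mu_ge1[of i] by simp
lemma M_Suc: "M (Suc k) = M k * \<mu> (Suc k)" by (simp add: M_prod)
lemma M0: "M 0 = 1" by (simp add: M_prod mu0)
lemma M_ge1: "1 \<le> M k" unfolding M_prod by (rule prod_ge_1) (use mu_ge1 in auto)
lemma M_pos: "0 < M k" using M_ge1[of k] by simp
lemma ratio: "M k / M (Suc k) = 1 / \<mu> (Suc k)" using M_pos[of k] by (simp add: M_Suc)

definition S where "S x = (\<Sum>i. lp (x / \<mu> (Suc i)))"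

lemma summable_lp: assumes x: "x > 0" shows "summable (\<lambda>i. lp (x / \<mu> (Suc i)))"
proof (rule summable_comparison_test[where g = "\<lambda>i. x * (M i / M (Suc i))"])
  show "\<exists>N. \<forall>n\<ge>N. norm (lp (x / \<mu> (Suc n))) \<le> x * (M n / M (Suc n))"
  proof (intro exI allI impI)
    fix n :: nat
    have "lp (x / \<mu> (Suc n)) \<le> x / \<mu> (Suc n)" using x mu_pos[of "Suc n"] by (intro lp_le) simp
    then show "norm (lp (x / \<mu> (Suc n))) \<le> x * (M n / M (Suc n))"
      by (simp add: ratio lp_nonneg)
  qed
  show "summable (\<lambda>i. x * (M i / M (Suc i)))" using nqa by (rule summable_mult)
qed

lemma S_nonneg: "x > 0 \<Longrightarrow> 0 \<le> S x"
  unfolding S_def by (rule suminf_nonneg[OF summable_lp]) (simp_all add: lp_nonneg)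

lemma ln_term: assumes x: "x > 0" shows "ln (x^n / M n) = (\<Sum>i<n. ln (x / \<mu> (Suc i)))"
proof (induction n)
  case 0 then show ?case by (simp add: M0)
next
  case (Suc n)
  have e: "x^(Suc n) / M (Suc n) = (x^n / M n) * (x / \<mu> (Suc n))" by (simp add: M_Suc)
  have p: "x^n / M n > 0" "x / \<mu> (Suc n) > 0" using x M_pos mu_pos by auto
  have "ln (x^(Suc n) / M (Suc n)) = ln (x^n / M n) + ln (x / \<mu> (Suc n))"
    unfolding e by (rule ln_mult_pos[OF p])
  then show ?case using Suc by simp
qed

lemma term_le: assumes x: "x > 0" shows "x^n * M 0 / M n \<le> exp (S x)"
proof -
  have "ln (x^n / M n) \<le> (\<Sum>i<n. lp (x / \<mu> (Suc i)))"
    unfolding ln_term[OF x] by (intro sum_mono) (simp add: lp_def)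
  also have "\<dots> \<le> S x" unfolding S_def
    using summable_lp[OF x] by (intro sum_le_suminf) (auto simp: lp_nonneg)
  finally have "ln (x^n / M n) \<le> S x" .
  moreover have "x^n / M n > 0" using x M_pos by auto
  ultimately have "x^n / M n \<le> exp (S x)"
    by (metis exp_le_cancel_iff exp_ln order_trans order_refl)
  then show ?thesis by (simp add: M0)
qed

end

context nqa_seq begin

lemma term_le0: assumes x: "x \<ge> 0" shows "x^n * M 0 / M n \<le> max 1 (exp (S x))"
proof (cases "x = 0")
  case True
  have "0^n / M n \<le> 1" using M_ge1[of n] by (cases n) auto
  then show ?thesis using True by (simp add: M0)
next
  case False
  then show ?thesis using term_le[of x n] x by simp
qed

lemma bdd: "x \<ge> 0 \<Longrightarrow> bdd_above (range (\<lambda>k. x^k * M 0 / M k))"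
  using term_le0 by (intro bdd_aboveI2) blast

lemma SUP_ge1: assumes "x \<ge> 0" shows "1 \<le> (SUP k. x^k * M 0 / M k)"
proof -
  have "x^0 * M 0 / M 0 \<le> (SUP k. x^k * M 0 / M k)" by (rule cSUP_upper[OF UNIV_I bdd[OF assms]])
  then show ?thesis by (simp add: M0)
qed

lemma SUP_pos: "x \<ge> 0 \<Longrightarrow> 0 < (SUP k. x^k * M 0 / M k)"
  using SUP_ge1 by (meson less_le_trans zero_less_one)

lemma om_nonneg: "x \<ge> 0 \<Longrightarrow> 0 \<le> omega_M M x"
  unfolding omega_M_def using SUP_ge1 by simp

lemma om_lower: assumes x: "x > 0" shows "ln (x^n / M n) \<le> omega_M M x"
proof -
  have "x^n * M 0 / M n \<le> (SUP k. x^k * M 0 / M k)" using x by (intro cSUP_upper bdd) auto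
  moreover have "0 < x^n / M n" using x M_pos by simp
  ultimately show ?thesis unfolding omega_M_def using SUP_pos[of x] x by (simp add: M0)
qed

lemma om_lower': assumes x: "x > 0" shows "real n * ln x - ln (M n) \<le> omega_M M x"
proof -
  have "ln (x^n / M n) = real n * ln x - ln (M n)"
    using x M_pos[of n] by (simp add: ln_div ln_realpow)
  then show ?thesis using om_lower[OF x, of n] by simp
qed

lemma om_upper: assumes x: "x > 0" shows "omega_M M x \<le> S x"
proof -
  have "(SUP k. x^k * M 0 / M k) \<le> exp (S x)" by (rule cSUP_least) (auto intro: term_le x)
  then have "ln (SUP k. x^k * M 0 / M k) \<le> ln (exp (S x))"
    using SUP_pos[of x] x by (subst ln_le_cancel_iff) auto
  then show ?thesis unfolding omega_M_def by simp
qed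

lemma om_mono: assumes "0 \<le> x" "x \<le> y" shows "omega_M M x \<le> omega_M M y"
proof -
  have "(SUP k. x^k * M 0 / M k) \<le> (SUP k. y^k * M 0 / M k)"
  proof (rule cSUP_mono)
    show "bdd_above (range (\<lambda>k. y^k * M 0 / M k))" using assms by (intro bdd) auto
    fix n
    have "x^n \<le> y^n" using assms by (intro power_mono) auto
    then have "x^n * M 0 / M n \<le> y^n * M 0 / M n" using M_pos[of n] by (simp add: M0 divide_right_mono)
    then show "\<exists>m\<in>UNIV. x^n * M 0 / M n \<le> y^m * M 0 / M m" by blast
  qed simp
  then show ?thesis unfolding omega_M_def using SUP_pos assms by simp
qed

lemma ot_nonneg: "x \<ge> 0 \<Longrightarrow> 0 \<le> omega_tilde M x"
  unfolding omega_tilde_def using om_nonneg[of x] by simp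

lemma ot_ge_om: "omega_M M x \<le> omega_tilde M x"
  unfolding omega_tilde_def by simp

lemma ot_mono: assumes "0 \<le> x" "x \<le> y" shows "omega_tilde M x \<le> omega_tilde M y"
proof -
  have "x\<^sup>2 \<le> y\<^sup>2" using assms by (intro power_mono) auto
  then have "ln (1 + x\<^sup>2) \<le> ln (1 + y\<^sup>2)"
    by (subst ln_le_cancel_iff) (auto intro: add_pos_nonneg)
  then show ?thesis unfolding omega_tilde_def using om_mono[OF assms] by simp
qed

definition W where "W x = omega_tilde M (max 0 x)"

lemma W_mono: "mono W"
  unfolding W_def mono_def by (auto intro: ot_mono)

lemma W_meas[measurable]: "W \<in> borel_measurable borel"
  by (rule borel_measurable_mono[OF W_mono])

lemma W_nonneg: "0 \<le> W x" unfolding W_def by (simp add: ot_nonneg)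

lemma W_eq: "x \<ge> 0 \<Longrightarrow> W x = omega_tilde M x" unfolding W_def by simp

end

lemma mg_step:
  assumes A: "nqa_seq Ma ma" and B: "nqa_seq Mb mb" and C: "C \<ge> 1"
    and mg: "\<And>j k. Ma (j + k) \<le> C ^ (j + k) * Mb j * Mb k"
    and x: "x \<ge> 0"
  shows "2 * omega_M Mb x \<le> omega_M Ma (C * x)"
proof -
  interpret a: nqa_seq Ma ma by (rule A)
  interpret b: nqa_seq Mb mb by (rule B)
  define E where "E = (SUP k. (C*x)^k * Ma 0 / Ma k)"
  have Cx: "C * x \<ge> 0" using C x by simp
  have E1: "1 \<le> E" unfolding E_def by (rule a.SUP_ge1[OF Cx])
  have "(SUP k. x^k * Mb 0 / Mb k) \<le> sqrt E"
  proof (rule cSUP_least)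
    fix j
    have "(C*x)^(j+j) * Ma 0 / Ma (j+j) \<le> E" unfolding E_def by (intro cSUP_upper a.bdd Cx) simp
    moreover have "(x^j / Mb j)^2 \<le> (C*x)^(j+j) / Ma (j+j)"
    proof -
      have "Ma (j+j) \<le> C^(j+j) * (Mb j)^2" using mg[of j j] by (simp add: power2_eq_square mult.assoc)
      then have "x^(j+j) * Ma (j+j) \<le> x^(j+j) * (C^(j+j) * (Mb j)^2)"
        using x by (intro mult_left_mono) auto
      then show ?thesis using a.M_pos[of "j+j"] b.M_pos[of j]
        by (simp add: field_simps power_mult_distrib power_add power2_eq_square)
    qed
    ultimately have "(x^j / Mb j)^2 \<le> E" by (simp add: a.M0)
    then have "x^j / Mb j \<le> sqrt E" by (rule real_le_rsqrt)
    then show "x^j * Mb 0 / Mb j \<le> sqrt E" by (simp add: b.M0)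
  qed simp
  then have "ln (SUP k. x^k * Mb 0 / Mb k) \<le> ln (sqrt E)"
    using b.SUP_pos[OF x] E1 by (subst ln_le_cancel_iff) auto
  also have "\<dots> = ln E / 2" using E1 by (simp add: ln_sqrt)
  finally show ?thesis unfolding omega_M_def E_def by simp
qed

lemma powr_m32: assumes s: "s > 0" shows "s powr (-3/2) = 1 / (s * sqrt s)"
proof -
  have "s powr (3/2) = s powr (1 + 1/2)" by simp
  also have "\<dots> = s powr 1 * s powr (1/2)" by (rule powr_add)
  finally have "s powr (3/2) = s powr 1 * s powr (1/2)" .
  then have "s powr (3/2) = s * sqrt s" using s by (simp add: powr_half_sqrt)
  then show ?thesis using s by (simp add: powr_minus_divide)
qed

lemma sqrt_div_sq: assumes s: "s > 0" shows "c * sqrt s / s\<^sup>2 = c * s powr (-3/2)"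
proof -
  have q: "sqrt s * sqrt s = s" using s by simp
  have p: "sqrt s > 0" using s by simp
  have "c * sqrt s / s\<^sup>2 = c * sqrt s / (s * (sqrt s * sqrt s))" by (simp only: q power2_eq_square)
  also have "\<dots> = c / (s * sqrt s)" using p s by (simp add: field_simps)
  finally show ?thesis by (subst powr_m32[OF s]) simp
qed

context nqa_seq begin

definition G :: "real \<Rightarrow> real \<Rightarrow> real" where "G r s = indicator {1..} s * (W (r * s) / s\<^sup>2)"

lemma G_meas[measurable]: "G r \<in> borel_measurable borel"
  unfolding G_def by measurable

lemma G_nonneg: "0 \<le> G r s" unfolding G_def by (simp add: W_nonneg)

definition phi where "phi r i s = 2 * sqrt (r / \<mu> (Suc i)) * (indicator {\<mu> (Suc i) / r..} s * s powr (-3/2))"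
definition psi where "psi r s = 4 * sqrt (1 + r) * (indicator {1..} s * s powr (-3/2))"

lemma phi_nonneg: "r > 0 \<Longrightarrow> 0 \<le> phi r i s"
  unfolding phi_def using mu_pos[of "Suc i"] by (auto simp: indicator_def)

lemma phi_int: assumes r: "r > 0"
  shows "integrable lborel (phi r i)" "(\<integral>s. phi r i s \<partial>lborel) = 4 * r * (M i / M (Suc i))"
proof -
  let ?a = "\<mu> (Suc i) / r"
  have a: "?a > 0" using r mu_pos[of "Suc i"] by simp
  note P = powr_tail_integral[of "-3/2" ?a, OF _ a]
  show "integrable lborel (phi r i)" unfolding phi_def using P(1) by simp
  have "(\<integral>s. phi r i s \<partial>lborel) = 2 * sqrt (r / \<mu> (Suc i)) * (- (?a powr (-3/2+1)) / (-3/2+1))"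
    unfolding phi_def using P(2) by simp
  also have "?a powr (-3/2+1) = 1 / sqrt ?a"
    using a by (simp add: powr_minus_divide powr_half_sqrt)
  also have "sqrt (r / \<mu> (Suc i)) = 1 / sqrt ?a" by (simp add: real_sqrt_divide)
  finally have "(\<integral>s. phi r i s \<partial>lborel) = 4 / ?a" using a r mu_pos[of "Suc i"]
    by (simp add: field_simps)
  also have "\<dots> = 4 * r * (M i / M (Suc i))" using r by (simp add: ratio)
  finally show "(\<integral>s. phi r i s \<partial>lborel) = 4 * r * (M i / M (Suc i))" .
qed

lemma psi_int: assumes r: "r > 0" shows "integrable lborel (psi r)"
  unfolding psi_def using powr_tail_integral(1)[of "-3/2" 1] by simp

lemma phi_summable: assumes r: "r > 0" shows "summable (\<lambda>i. phi r i s)"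
proof -
  have "filterlim (\<lambda>i. \<mu> (Suc i)) at_top sequentially"
    using mu_lim by (simp only: filterlim_sequentially_Suc)
  then have "eventually (\<lambda>i. r * s + 1 \<le> \<mu> (Suc i)) sequentially"
    unfolding filterlim_at_top by blast
  then have "eventually (\<lambda>i. phi r i s = 0) sequentially"
  proof (rule eventually_mono)
    fix i assume "r * s + 1 \<le> \<mu> (Suc i)"
    then have "s < \<mu> (Suc i) / r" using r by (simp add: field_simps)
    then show "phi r i s = 0" unfolding phi_def by (simp add: indicator_def)
  qed
  then show ?thesis by (subst summable_cong) auto
qed

lemma lp_phi: assumes r: "r > 0" and s: "s > 0"
  shows "lp (r * s / \<mu> (Suc i)) / s\<^sup>2 \<le> phi r i s"
proof (cases "s < \<mu> (Suc i) / r")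
  case True
  then have "r * s / \<mu> (Suc i) < 1" using r mu_pos[of "Suc i"] by (simp add: field_simps)
  then have "ln (r * s / \<mu> (Suc i)) \<le> 0" using r s mu_pos[of "Suc i"] by simp
  then have "lp (r * s / \<mu> (Suc i)) = 0" by (simp add: lp_def)
  then show ?thesis using phi_nonneg[OF r] by simp
next
  case False
  have pos: "r * s / \<mu> (Suc i) > 0" using r s mu_pos[of "Suc i"] by simp
  have "lp (r * s / \<mu> (Suc i)) \<le> 2 * sqrt (r * s / \<mu> (Suc i))"
    unfolding lp_def using ln_le_2sqrt[OF pos] pos by simp
  then have "lp (r * s / \<mu> (Suc i)) / s\<^sup>2 \<le> 2 * sqrt (r * s / \<mu> (Suc i)) / s\<^sup>2"
    by (simp add: divide_right_mono)
  also have "2 * sqrt (r * s / \<mu> (Suc i)) = 2 * sqrt (r / \<mu> (Suc i)) * sqrt s"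
    by (simp add: real_sqrt_mult[symmetric])
  also have "2 * sqrt (r / \<mu> (Suc i)) * sqrt s / s\<^sup>2 = 2 * sqrt (r / \<mu> (Suc i)) * s powr (-3/2)"
    by (rule sqrt_div_sq[OF s])
  finally show ?thesis using False unfolding phi_def by (simp add: indicator_def)
qed

lemma log_psi: assumes r: "r > 0" and s: "s \<ge> 1"
  shows "ln (1 + (r * s)\<^sup>2) / s\<^sup>2 \<le> psi r s"
proof -
  have s0: "s > 0" using s by simp
  have "1 + (r * s)\<^sup>2 \<le> ((1+r) * s)\<^sup>2"
  proof -
    have "1 \<le> s\<^sup>2" using s by (simp add: one_le_power)
    moreover have "0 \<le> 2*r * s\<^sup>2" using r by simp
    ultimately show ?thesis by (simp add: power2_eq_square algebra_simps)
  qed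
  then have "ln (1 + (r * s)\<^sup>2) \<le> ln (((1+r) * s)\<^sup>2)"
    using r s by (subst ln_le_cancel_iff) (auto intro: add_pos_nonneg)
  also have "\<dots> = 2 * ln ((1+r) * s)" using r s0 by (simp add: ln_realpow)
  also have "\<dots> \<le> 2 * (2 * sqrt ((1+r) * s))" using ln_le_2sqrt[of "(1+r) * s"] r s0 by simp
  finally have "ln (1 + (r * s)\<^sup>2) / s\<^sup>2 \<le> 4 * sqrt ((1+r) * s) / s\<^sup>2"
    by (simp add: divide_right_mono)
  also have "4 * sqrt ((1+r) * s) = 4 * sqrt (1+r) * sqrt s"
    by (simp add: real_sqrt_mult)
  also have "4 * sqrt (1+r) * sqrt s / s\<^sup>2 = 4 * sqrt (1+r) * s powr (-3/2)"
    by (rule sqrt_div_sq[OF s0])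
  also have "\<dots> = psi r s" unfolding psi_def using s by simp
  finally show ?thesis .
qed

lemma G_bound: assumes r: "r > 0" shows "G r s \<le> (\<Sum>i. phi r i s) + psi r s"
proof (cases "s \<ge> 1")
  case False
  then have "G r s = 0" unfolding G_def by simp
  moreover have "0 \<le> (\<Sum>i. phi r i s)" using phi_summable[OF r] phi_nonneg[OF r] by (intro suminf_nonneg) auto
  moreover have "0 \<le> psi r s" unfolding psi_def using r by (simp add: indicator_def)
  ultimately show ?thesis by simp
next
  case True
  have s0: "s > 0" using True by simp
  have rs: "r * s > 0" using r s0 by simp
  have "W (r * s) = omega_M M (r * s) + ln (1 + (r * s)\<^sup>2)"
    using rs by (simp add: W_eq omega_tilde_def)
  then have "G r s = omega_M M (r * s) / s\<^sup>2 + ln (1 + (r * s)\<^sup>2) / s\<^sup>2"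
    unfolding G_def using True by (simp add: add_divide_distrib)
  also have "omega_M M (r * s) / s\<^sup>2 \<le> S (r * s) / s\<^sup>2"
    using om_upper[OF rs] by (simp add: divide_right_mono)
  also have "S (r * s) / s\<^sup>2 = (\<Sum>i. lp (r * s / \<mu> (Suc i)) / s\<^sup>2)"
    unfolding S_def using summable_lp[OF rs] by (simp add: suminf_divide)
  also have "\<dots> \<le> (\<Sum>i. phi r i s)"
    using lp_phi[OF r s0] summable_lp[OF rs] phi_summable[OF r]
    by (intro suminf_le summable_divide) auto
  also have "ln (1 + (r * s)\<^sup>2) / s\<^sup>2 \<le> psi r s" by (rule log_psi[OF r True])
  finally show ?thesis by simp
qed

lemma G_int: assumes r: "r > 0" shows "integrable lborel (G r)"
proof (rule Bochner_Integration.integrable_bound[where f="\<lambda>s. (\<Sum>i. phi r i s) + psi r s"])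
  have s1: "integrable lborel (\<lambda>s. \<Sum>i. phi r i s)"
  proof (rule integrable_suminf)
    show "integrable lborel (phi r i)" for i by (rule phi_int(1)[OF r])
    show "AE x in lborel. summable (\<lambda>i. norm (phi r i x))"
      using phi_summable[OF r] phi_nonneg[OF r] by simp
    have "(\<lambda>i. \<integral>x. norm (phi r i x) \<partial>lborel) = (\<lambda>i. 4 * r * (M i / M (Suc i)))"
      using phi_int(2)[OF r] phi_nonneg[OF r] by simp
    then show "summable (\<lambda>i. \<integral>x. norm (phi r i x) \<partial>lborel)"
      using summable_mult[OF nqa, of "4*r"] by simp
  qed
  show "integrable lborel (\<lambda>s. (\<Sum>i. phi r i s) + psi r s)"
    using s1 psi_int[OF r] by simp
  show "G r \<in> borel_measurable lborel" by simp
  show "AE x in lborel. norm (G r x) \<le> norm ((\<Sum>i. phi r i x) + psi r x)"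
  proof (rule AE_I2)
    fix x
    have "0 \<le> G r x" by (rule G_nonneg)
    moreover have "G r x \<le> (\<Sum>i. phi r i x) + psi r x" by (rule G_bound[OF r])
    ultimately show "norm (G r x) \<le> norm ((\<Sum>i. phi r i x) + psi r x)" by simp
  qed
qed

end

lemma inv_sq_integral:
  shows "integrable lborel (\<lambda>s::real. indicator {1..} s * s powr (-2))"
    and "(\<integral>s. indicator {1..} s * (s::real) powr (-2) \<partial>lborel) = 1"
  using powr_tail_integral[of "-2" 1] by simp_all

lemma powr_m2: "(s::real) > 0 \<Longrightarrow> s powr (-2) = 1 / s\<^sup>2"
  by (simp add: powr_minus_divide power2_eq_square powr_mult_base)

context nqa_seq begin

definition kap where "kap r = kappa (omega_tilde M) r"
definition P where "P r = poissonP (omega_tilde M) 0 r"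
definition h where "h r t = W \<bar>t\<bar> / (t\<^sup>2 + r\<^sup>2)"

lemma kap_G: assumes r: "r \<ge> 0" shows "kap r = (\<integral>s. G r s \<partial>lborel)"
  unfolding kap_def kappa_def set_lebesgue_integral_def
proof (rule Bochner_Integration.integral_cong[OF refl])
  fix s :: real
  show "indicator {1..} s *\<^sub>R (omega_tilde M (r * s) / s\<^sup>2) = G r s"
    unfolding G_def using r by (cases "s \<ge> 1") (auto simp: W_eq indicator_def)
qed

lemma kap_nonneg: "r \<ge> 0 \<Longrightarrow> 0 \<le> kap r"
  using kap_G by (simp add: G_nonneg)

lemma W_le_kap: assumes r: "r > 0" shows "W r \<le> kap r"
proof -
  have "(\<integral>s. W r * (indicator {1..} s * (s::real) powr (-2)) \<partial>lborel)
      = W r * (\<integral>s. indicator {1..} s * (s::real) powr (-2) \<partial>lborel)"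
    by (rule integral_mult_right_zero)
  then have "W r = (\<integral>s. W r * (indicator {1..} s * (s::real) powr (-2)) \<partial>lborel)"
    by (simp only: inv_sq_integral(2) mult_1_right)
  also have "\<dots> \<le> (\<integral>s. G r s \<partial>lborel)"
  proof (rule integral_mono)
    show "integrable lborel (\<lambda>s. W r * (indicator {1..} s * s powr (-2)))"
      using inv_sq_integral(1) by simp
    show "integrable lborel (G r)" by (rule G_int[OF r])
    fix s :: real
    show "W r * (indicator {1..} s * s powr (-2)) \<le> G r s"
    proof (cases "s \<ge> 1")
      case True
      have "r * 1 \<le> r * s" using r True by (intro mult_left_mono) auto
      then have "W r \<le> W (r * s)" by (simp add: monoD[OF W_mono])
      then have "W r / s\<^sup>2 \<le> W (r * s) / s\<^sup>2" by (rule divide_right_mono) simp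
      moreover have "s powr (-2) = 1 / s\<^sup>2" by (rule powr_m2) (use True in simp)
      ultimately show ?thesis unfolding G_def using True by (simp add: indicator_def)
    next
      case False
      then show ?thesis unfolding G_def by (simp add: indicator_def)
    qed
  qed
  finally show ?thesis unfolding kap_G[OF less_imp_le[OF r]] .
qed

lemma h_meas[measurable]: "h r \<in> borel_measurable borel"
  unfolding h_def by measurable

lemma h_nonneg: "0 \<le> h r t" unfolding h_def by (simp add: W_nonneg)

lemma P_h: assumes r: "r > 0" shows "P r = r / pi * (\<integral>t. h r t \<partial>lborel)"
proof -
  have "(\<lambda>t. omega_tilde M \<bar>t\<bar> / ((0 - t)\<^sup>2 + r\<^sup>2)) = h r"
    by (rule ext) (simp add: h_def W_eq)
  then show ?thesis unfolding P_def poissonP_def using r by simp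
qed

lemma Gs_int: assumes r: "r > 0"
  shows "integrable lborel (\<lambda>t. G r (t / r))" "(\<integral>t. G r (t / r) \<partial>lborel) = r * kap r"
    and "integrable lborel (\<lambda>t. G r (- t / r))" "(\<integral>t. G r (- t / r) \<partial>lborel) = r * kap r"
proof -
  have i: "integrable lborel (G r)" by (rule G_int[OF r])
  have "integrable lborel (\<lambda>x. G r (0 + (1/r) * x))"
    using r by (subst lborel_integrable_real_affine_iff) (auto simp: i)
  then show "integrable lborel (\<lambda>t. G r (t / r))" by simp
  have "integrable lborel (\<lambda>x. G r (0 + (-1/r) * x))"
    using r by (subst lborel_integrable_real_affine_iff) (auto simp: i)
  then show "integrable lborel (\<lambda>t. G r (- t / r))" by simp
  have "(\<integral>t. G r (t / r) \<partial>lborel) = \<bar>r\<bar> *\<^sub>R (\<integral>x. G r ((0 + r * x) / r) \<partial>lborel)"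
    using r by (intro lborel_integral_real_affine) simp
  also have "\<dots> = r * kap r" using r by (simp add: kap_G)
  finally show "(\<integral>t. G r (t / r) \<partial>lborel) = r * kap r" .
  have "(\<integral>t. G r (- t / r) \<partial>lborel) = \<bar>-r\<bar> *\<^sub>R (\<integral>x. G r (- (0 + (-r) * x) / r) \<partial>lborel)"
    using r by (intro lborel_integral_real_affine) simp
  also have "\<dots> = r * kap r" using r by (simp add: kap_G)
  finally show "(\<integral>t. G r (- t / r) \<partial>lborel) = r * kap r" .
qed

lemma h_upper: assumes r: "r > 0"
  shows "h r t \<le> indicator {-r..r} t * (W r / r\<^sup>2) + (G r (t / r) + G r (- t / r)) / r\<^sup>2"
proof -
  have G0: "0 \<le> G r (t / r)" "0 \<le> G r (- t / r)" by (simp_all add: G_nonneg)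
  consider "\<bar>t\<bar> \<le> r" | "t > r" | "t < -r" by linarith
  then show ?thesis
  proof cases
    case 1
    have "W \<bar>t\<bar> \<le> W r" using W_mono 1 by (rule monoD)
    moreover have "r\<^sup>2 \<le> t\<^sup>2 + r\<^sup>2" by simp
    ultimately have "h r t \<le> W r / r\<^sup>2" unfolding h_def using r W_nonneg
      by (meson frac_le zero_less_power)
    moreover have "indicator {-r..r} t = (1::real)" using 1 by (simp add: indicator_def abs_le_iff)
    moreover have "0 \<le> (G r (t / r) + G r (- t / r)) / r\<^sup>2" using G0 by simp
    ultimately show ?thesis by simp
  next
    case 2
    have t0: "t > 0" using 2 r by simp
    have "G r (t / r) / r\<^sup>2 = W t / t\<^sup>2"
      unfolding G_def using 2 r by (simp add: field_simps indicator_def power2_eq_square)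
    moreover have "h r t \<le> W t / t\<^sup>2" unfolding h_def using t0 r W_nonneg
      by (intro frac_le) auto
    moreover have "0 \<le> indicator {-r..r} t * (W r / r\<^sup>2)" by (simp add: W_nonneg)
    moreover have "0 \<le> G r (- t / r) / r\<^sup>2" using G0 by simp
    ultimately show ?thesis by (simp add: add_divide_distrib)
  next
    case 3
    have t0: "-t > 0" using 3 r by simp
    have "G r (- t / r) / r\<^sup>2 = W (-t) / t\<^sup>2"
      unfolding G_def using 3 r by (simp add: field_simps indicator_def power2_eq_square)
    moreover have "h r t \<le> W (-t) / t\<^sup>2" unfolding h_def using t0 r W_nonneg
      by (intro frac_le) auto
    moreover have "0 \<le> indicator {-r..r} t * (W r / r\<^sup>2)" by (simp add: W_nonneg)
    moreover have "0 \<le> G r (t / r) / r\<^sup>2" using G0 by simp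
    ultimately show ?thesis by (simp add: add_divide_distrib)
  qed
qed

end

lemma box_int: assumes r: "(r::real) > 0"
  shows "integrable lborel (\<lambda>t. indicator {-r..r} t * c)"
    and "(\<integral>t. indicator {-r..r} t * c \<partial>lborel) = 2 * r * c"
proof -
  have i: "integrable lborel (indicator {-r..r} :: real \<Rightarrow> real)"
    by (rule integrable_real_indicator) (auto simp: emeasure_lborel_Icc_eq)
  then show "integrable lborel (\<lambda>t. indicator {-r..r} t * c)" by simp
  have "measure lborel {-r..r} = 2 * r" using r by (simp add: measure_def emeasure_lborel_Icc_eq)
  then show "(\<integral>t. indicator {-r..r} t * c \<partial>lborel) = 2 * r * c"
    using i by (simp add: Bochner_Integration.integral_indicator)
qed

context nqa_seq begin

definition U where "U r t = indicator {-r..r} t * (W r / r\<^sup>2) + (G r (t / r) + G r (- t / r)) / r\<^sup>2"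

lemma U_int: assumes r: "r > 0"
  shows "integrable lborel (U r)" "(\<integral>t. U r t \<partial>lborel) = 2 * (W r + kap r) / r"
proof -
  note B = box_int[OF r, of "W r / r\<^sup>2"]
  note GI = Gs_int[OF r]
  have i2: "integrable lborel (\<lambda>t. (G r (t / r) + G r (- t / r)) / r\<^sup>2)"
    using GI(1,3) by simp
  show "integrable lborel (U r)" unfolding U_def using B(1) i2 by simp
  have "(\<integral>t. U r t \<partial>lborel) = (\<integral>t. indicator {-r..r} t * (W r / r\<^sup>2) \<partial>lborel)
      + (\<integral>t. (G r (t / r) + G r (- t / r)) / r\<^sup>2 \<partial>lborel)"
    unfolding U_def using B(1) i2 by (rule Bochner_Integration.integral_add)
  also have "(\<integral>t. (G r (t / r) + G r (- t / r)) / r\<^sup>2 \<partial>lborel)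
      = ((\<integral>t. G r (t / r) \<partial>lborel) + (\<integral>t. G r (- t / r) \<partial>lborel)) / r\<^sup>2"
    using GI(1,3) by simp
  also have "(\<integral>t. indicator {-r..r} t * (W r / r\<^sup>2) \<partial>lborel) = 2 * r * (W r / r\<^sup>2)"
    by (rule B(2))
  also have "((\<integral>t. G r (t / r) \<partial>lborel) + (\<integral>t. G r (- t / r) \<partial>lborel)) / r\<^sup>2
     = (r * kap r + r * kap r) / r\<^sup>2" using GI(2,4) by simp
  also have "2 * r * (W r / r\<^sup>2) + (r * kap r + r * kap r) / r\<^sup>2 = 2 * (W r + kap r) / r"
    using r by (simp add: power2_eq_square field_simps)
  finally show "(\<integral>t. U r t \<partial>lborel) = 2 * (W r + kap r) / r" .
qed

lemma h_int: assumes r: "r > 0" shows "integrable lborel (h r)"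
proof (rule Bochner_Integration.integrable_bound[where f="U r"])
  show "integrable lborel (U r)" by (rule U_int[OF r])
  show "h r \<in> borel_measurable lborel" by simp
  show "AE x in lborel. norm (h r x) \<le> norm (U r x)"
  proof (rule AE_I2)
    fix x
    have "h r x \<le> U r x" unfolding U_def by (rule h_upper[OF r])
    then show "norm (h r x) \<le> norm (U r x)" using h_nonneg[of r x] by simp
  qed
qed

lemma P_upper: assumes r: "r > 0" shows "P r \<le> 2 * kap r"
proof -
  have "(\<integral>t. h r t \<partial>lborel) \<le> (\<integral>t. U r t \<partial>lborel)"
    using h_int[OF r] U_int(1)[OF r] h_upper[OF r] unfolding U_def[symmetric]
    by (intro integral_mono) auto
  then have "P r \<le> r / pi * (2 * (W r + kap r) / r)"
    unfolding P_h[OF r] U_int(2)[OF r] using r by (intro mult_left_mono) auto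
  also have "\<dots> = 2 * (W r + kap r) / pi" using r by simp
  also have "\<dots> \<le> 2 * (2 * kap r) / pi" using W_le_kap[OF r] by (intro divide_right_mono) auto
  also have "\<dots> \<le> 2 * kap r"
  proof -
    have "0 \<le> kap r" using r by (intro kap_nonneg) simp
    moreover have "2 \<le> pi" using pi_gt3 by simp
    ultimately have "2 * kap r \<le> pi * kap r" by (intro mult_right_mono)
    then show ?thesis by (simp add: field_simps)
  qed
  finally show ?thesis .
qed

lemma h_lower: assumes r: "r > 0" shows "G r (t / r) / (2 * r\<^sup>2) \<le> h r t"
proof (cases "t \<ge> r")
  case True
  have t0: "t > 0" using True r by simp
  have "G r (t / r) / (2 * r\<^sup>2) = W t / (2 * t\<^sup>2)"
    unfolding G_def using True r by (simp add: field_simps indicator_def power2_eq_square)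
  also have "\<dots> \<le> h r t"
  proof -
    have p: "0 < t\<^sup>2 + r\<^sup>2" using r t0 by (simp add: add_pos_pos)
    have "r\<^sup>2 \<le> t\<^sup>2" using True r by (intro power_mono) auto
    then have "t\<^sup>2 + r\<^sup>2 \<le> 2 * t\<^sup>2" by simp
    then show ?thesis unfolding h_def using p W_nonneg t0 by (intro frac_le) auto
  qed
  finally show ?thesis .
next
  case False
  then have "G r (t / r) = 0" unfolding G_def using r by (simp add: indicator_def field_simps)
  then show ?thesis using h_nonneg by simp
qed

lemma P_lower: assumes r: "r > 0" shows "kap r / (2 * pi) \<le> P r"
proof -
  have "(\<integral>t. G r (t / r) / (2 * r\<^sup>2) \<partial>lborel) \<le> (\<integral>t. h r t \<partial>lborel)"
    using h_int[OF r] Gs_int(1)[OF r] h_lower[OF r]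
    by (intro integral_mono) auto
  moreover have "(\<integral>t. G r (t / r) / (2 * r\<^sup>2) \<partial>lborel) = r * kap r / (2 * r\<^sup>2)"
    using Gs_int(2)[OF r] by simp
  ultimately have "r / pi * (r * kap r / (2 * r\<^sup>2)) \<le> P r"
    unfolding P_h[OF r] using r by (intro mult_left_mono) auto
  moreover have "r / pi * (r * kap r / (2 * r\<^sup>2)) = kap r / (2 * pi)"
    using r by (simp add: power2_eq_square field_simps)
  ultimately show ?thesis by simp
qed

end

lemma powr_half_split: assumes u: "(u::real) > 0" shows "u powr (real k + 1/2) = u^k * sqrt u"
  using u by (simp add: powr_add powr_realpow powr_half_sqrt)

context nqa_seq begin

definition Kf where "Kf k = exp (phi_star (normalize_wf (kappa (omega_tilde M))) (real k))"
definition Qf where "Qf k = (SUP r\<in>{0<..}. r powr (real k + 1/2) * exp (- poissonP (omega_tilde M) 0 r / 2))"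

lemma kap_fun: "kappa (omega_tilde M) = kap" by (rule ext) (simp add: kap_def)

lemma norm_kap: assumes y: "y \<ge> 0"
  shows "normalize_wf (kappa (omega_tilde M)) (exp y) = kap (exp y) - kap 1"
  using y unfolding kap_fun normalize_wf_def by auto

lemma om_exp_lower: "real k * y - ln (M k) \<le> omega_M M (exp y)"
  using om_lower'[of "exp y" k] by simp

lemma kap_exp_lower: "real k * y - ln (M k) \<le> kap (exp y)"
proof -
  have "omega_M M (exp y) \<le> W (exp y)" using W_eq[of "exp y"] ot_ge_om by simp
  also have "\<dots> \<le> kap (exp y)" by (rule W_le_kap) simp
  finally show ?thesis using om_exp_lower[of k y] by simp
qed

lemma K_bdd: "bdd_above ((\<lambda>y. real k * y - normalize_wf (kappa (omega_tilde M)) (exp y)) ` {0..})"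
proof (rule bdd_aboveI2)
  fix y :: real assume "y \<in> {0..}"
  then have y: "y \<ge> 0" by simp
  show "real k * y - normalize_wf (kappa (omega_tilde M)) (exp y) \<le> ln (M k) + kap 1"
    unfolding norm_kap[OF y] using kap_exp_lower[of k y] by simp
qed

lemma K_ge1: "1 \<le> Kf k"
proof -
  have "real k * 0 - normalize_wf (kappa (omega_tilde M)) (exp 0) \<le> phi_star (normalize_wf (kappa (omega_tilde M))) (real k)"
    unfolding phi_star_def by (rule cSUP_upper[OF _ K_bdd]) simp
  then have "0 \<le> phi_star (normalize_wf (kappa (omega_tilde M))) (real k)"
    by (simp add: normalize_wf_def)
  then show ?thesis unfolding Kf_def by simp
qed

lemma K_lower: assumes u: "u > 0" shows "u^k * exp (- kap u) \<le> Kf k"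
proof (cases "u \<le> 1")
  case True
  have "u^k \<le> 1" using True u by (simp add: power_le_one)
  moreover have "exp (- kap u) \<le> 1" using kap_nonneg[of u] u by simp
  ultimately have "u^k * exp (- kap u) \<le> 1 * 1" using u by (intro mult_mono) auto
  then show ?thesis using K_ge1[of k] by simp
next
  case False
  define y where "y = ln u"
  have y: "y \<ge> 0" and ey: "exp y = u" using u False by (auto simp: y_def)
  have "real k * y - normalize_wf (kappa (omega_tilde M)) (exp y) \<le> phi_star (normalize_wf (kappa (omega_tilde M))) (real k)"
    unfolding phi_star_def by (rule cSUP_upper[OF _ K_bdd]) (use y in simp)
  moreover have nk: "normalize_wf (kappa (omega_tilde M)) (exp y) = kap u - kap 1"
    using norm_kap[OF y] ey by simp
  ultimately have "real k * y + - kap u + kap 1 \<le> phi_star (normalize_wf (kappa (omega_tilde M))) (real k)"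
    by simp
  then have le: "exp (real k * y + - kap u + kap 1) \<le> Kf k" unfolding Kf_def by simp
  have e1: "exp (real k * y) = u^k" using ey exp_of_nat_mult[of k y] by simp
  have "exp (real k * y + - kap u + kap 1) = exp (real k * y) * exp (- kap u) * exp (kap 1)"
    by (simp only: exp_add)
  then have e2: "exp (real k * y + - kap u + kap 1) = u^k * exp (- kap u) * exp (kap 1)"
    by (simp only: e1)
  have "u^k * exp (- kap u) * 1 \<le> u^k * exp (- kap u) * exp (kap 1)"
    using kap_nonneg[of 1] u by (intro mult_left_mono) auto
  then show ?thesis using le e2 by simp
qed

lemma Q_term_lower: assumes u: "u \<ge> 1"
  shows "u^k * exp (- kap u) \<le> u powr (real k + 1/2) * exp (- poissonP (omega_tilde M) 0 u / 2)"
proof -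
  have u0: "u > 0" using u by simp
  have "u^k \<le> u^k * sqrt u" using u by (simp add: mult_le_cancel_left1)
  also have "\<dots> = u powr (real k + 1/2)" by (rule powr_half_split[OF u0, symmetric])
  finally have a: "u^k \<le> u powr (real k + 1/2)" .
  have "P u \<le> 2 * kap u" by (rule P_upper[OF u0])
  then have b: "exp (- kap u) \<le> exp (- poissonP (omega_tilde M) 0 u / 2)" unfolding P_def by simp
  show ?thesis using a b u0 by (intro mult_mono) auto
qed

lemma Q_pos: assumes bdd: "bdd_above ((\<lambda>r. r powr (real k + 1/2) * exp (- poissonP (omega_tilde M) 0 r / 2)) ` {0<..})"
  shows "0 < Qf k"
proof -
  have "1 powr (real k + 1/2) * exp (- poissonP (omega_tilde M) 0 1 / 2) \<le> Qf k"
    unfolding Qf_def by (rule cSUP_upper[OF _ bdd]) simp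
  moreover have "0 < 1 powr (real k + 1/2) * exp (- poissonP (omega_tilde M) 0 1 / 2)" by simp
  ultimately show ?thesis by linarith
qed

lemma K_le_Q: assumes bdd: "bdd_above ((\<lambda>r. r powr (real k + 1/2) * exp (- poissonP (omega_tilde M) 0 r / 2)) ` {0<..})"
  shows "Kf k \<le> exp (kap 1) * Qf k"
proof -
  have Qp: "0 < Qf k" by (rule Q_pos[OF bdd])
  have "phi_star (normalize_wf (kappa (omega_tilde M))) (real k) \<le> kap 1 + ln (Qf k)"
    unfolding phi_star_def
  proof (rule cSUP_least)
    show "{0::real..} \<noteq> {}" by auto
    fix y :: real assume "y \<in> {0..}"
    then have y: "y \<ge> 0" by simp
    define u where "u = exp y"
    have u: "u \<ge> 1" using y by (simp add: u_def)
    have "u^k * exp (- kap u) \<le> u powr (real k + 1/2) * exp (- poissonP (omega_tilde M) 0 u / 2)"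
      by (rule Q_term_lower[OF u])
    also have "\<dots> \<le> Qf k" unfolding Qf_def by (rule cSUP_upper[OF _ bdd]) (use u in simp)
    finally have le: "u^k * exp (- kap u) \<le> Qf k" .
    have e1: "exp (real k * y) = u^k" unfolding u_def by (rule exp_of_nat_mult)
    have "exp (real k * y + - kap u) = exp (real k * y) * exp (- kap u)" by (simp only: exp_add)
    then have "exp (real k * y - kap u) = u^k * exp (- kap u)" by (simp only: e1 diff_conv_add_uminus)
    then have "exp (real k * y - kap u) \<le> Qf k" using le by simp
    then have "real k * y - kap u \<le> ln (Qf k)" using Qp by (simp add: ln_ge_iff)
    then show "real k * y - normalize_wf (kappa (omega_tilde M)) (exp y) \<le> kap 1 + ln (Qf k)"
      unfolding norm_kap[OF y] u_def by simp
  qed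
  then have "Kf k \<le> exp (kap 1 + ln (Qf k))" unfolding Kf_def by simp
  also have "\<dots> = exp (kap 1) * Qf k" using Qp by (simp add: exp_add)
  finally show ?thesis .
qed

lemma log_bound: "\<exists>c. \<forall>x\<ge>0. 64 * ln (1 + x\<^sup>2) \<le> omega_M M x + c"
proof (intro exI allI impI)
  fix x :: real assume x: "x \<ge> 0"
  have lM: "0 \<le> ln (M 128)" using M_ge1[of 128] by simp
  have l2: "0 \<le> ln (2::real)" by simp
  show "64 * ln (1 + x\<^sup>2) \<le> omega_M M x + (64 * ln 2 + ln (M 128))"
  proof (cases "x \<ge> 1")
    case True
    have "1 + x\<^sup>2 \<le> 2 * x\<^sup>2" using True by (simp add: one_le_power)
    then have "ln (1 + x\<^sup>2) \<le> ln (2 * x\<^sup>2)" using True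
      by (subst ln_le_cancel_iff) (auto intro: add_pos_nonneg)
    also have "\<dots> = ln 2 + 2 * ln x" using True by (simp add: ln_mult ln_realpow)
    finally have "64 * ln (1 + x\<^sup>2) \<le> 64 * ln 2 + 128 * ln x" by simp
    moreover have "real 128 * ln x - ln (M 128) \<le> omega_M M x" using True by (intro om_lower') simp
    ultimately show ?thesis by simp
  next
    case False
    have "1 + x\<^sup>2 \<le> 2" using False x by (simp add: power_le_one)
    then have "ln (1 + x\<^sup>2) \<le> ln 2"
      by (subst ln_le_cancel_iff) (auto intro: add_pos_nonneg)
    then show ?thesis using om_nonneg[OF x] lM by simp
  qed
qed

end

lemma W_compare:
  assumes A: "nqa_seq Ma ma" and B: "nqa_seq Mb mb" and C: "C \<ge> 1"
    and c0: "\<forall>x\<ge>0. 64 * ln (1 + x\<^sup>2) \<le> omega_M Ma x + c0"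
    and om: "\<forall>y\<ge>0. 64 * omega_M Mb y \<le> omega_M Ma (C * y)"
    and x: "x \<ge> 0"
  shows "32 * nqa_seq.W Mb (x / C) \<le> nqa_seq.W Ma x + c0 / 2"
proof -
  interpret a: nqa_seq Ma ma by (rule A)
  interpret b: nqa_seq Mb mb by (rule B)
  have xC: "x / C \<ge> 0" using x C by simp
  have "(x / C)\<^sup>2 \<le> x\<^sup>2"
  proof -
    have "x / C \<le> x" using x C by (simp add: divide_le_eq mult_le_cancel_left1 order_trans[of _ x])
    then show ?thesis using xC by (intro power_mono) auto
  qed
  then have l: "ln (1 + (x / C)\<^sup>2) \<le> ln (1 + x\<^sup>2)"
    by (subst ln_le_cancel_iff) (auto intro: add_pos_nonneg)
  have "64 * omega_M Mb (x / C) \<le> omega_M Ma x" using om xC C by (metis nonzero_mult_div_cancel_left times_divide_eq_right not_one_le_zero)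
  moreover have "64 * ln (1 + x\<^sup>2) \<le> omega_M Ma x + c0" using c0 x by blast
  moreover have "b.W (x / C) = omega_M Mb (x / C) + ln (1 + (x / C)\<^sup>2)"
    using b.W_eq[OF xC] by (simp add: omega_tilde_def)
  moreover have "a.W x = omega_M Ma x + ln (1 + x\<^sup>2)"
    using a.W_eq[OF x] by (simp add: omega_tilde_def)
  moreover have "0 \<le> ln (1 + x\<^sup>2)" by simp
  ultimately show ?thesis using l by linarith
qed


lemma kap_compare:
  assumes A: "nqa_seq Ma ma" and B: "nqa_seq Mb mb" and C: "C \<ge> 1"
    and pw: "\<forall>x\<ge>0. 32 * nqa_seq.W Mb (x / C) \<le> nqa_seq.W Ma x + c"
    and r: "r > 0"
  shows "32 * nqa_seq.kap Mb (r / C) - c \<le> nqa_seq.kap Ma r"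
proof -
  interpret a: nqa_seq Ma ma by (rule A)
  interpret b: nqa_seq Mb mb by (rule B)
  have rC: "r / C > 0" using r C by simp
  let ?L = "\<lambda>s. 32 * b.G (r / C) s - c * (indicator {1..} s * s powr (-2))"
  have iL: "integrable lborel ?L"
    using b.G_int[OF rC] inv_sq_integral(1) by simp
  have "(\<integral>s. ?L s \<partial>lborel) = 32 * (\<integral>s. b.G (r / C) s \<partial>lborel) - c * 1"
    using b.G_int[OF rC] inv_sq_integral by simp
  also have "\<dots> = 32 * b.kap (r / C) - c" using b.kap_G[of "r / C"] rC by simp
  finally have eL: "(\<integral>s. ?L s \<partial>lborel) = 32 * b.kap (r / C) - c" .
  have "(\<integral>s. ?L s \<partial>lborel) \<le> (\<integral>s. a.G r s \<partial>lborel)"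
  proof (rule integral_mono[OF iL a.G_int[OF r]])
    fix s :: real
    show "?L s \<le> a.G r s"
    proof (cases "s \<ge> 1")
      case True
      have s0: "s > 0" using True by simp
      have rs: "r * s \<ge> 0" using r s0 by simp
      have "32 * b.W (r * s / C) \<le> a.W (r * s) + c" using pw rs by blast
      then have "(32 * b.W (r * s / C) - c) / s\<^sup>2 \<le> a.W (r * s) / s\<^sup>2"
        by (intro divide_right_mono) auto
      moreover have "s powr (-2) = 1 / s\<^sup>2" by (rule powr_m2[OF s0])
      moreover have "r / C * s = r * s / C" by simp
      ultimately show ?thesis unfolding a.G_def b.G_def using True
        by (simp add: diff_divide_distrib)
    next
      case False
      then show ?thesis unfolding a.G_def b.G_def by simp
    qed
  qed
  then show ?thesis using eL a.kap_G[of r] r by simp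
qed

lemma Q_upper_cross:
  assumes A: "nqa_seq Ma ma" and B: "nqa_seq Mb mb" and C: "C \<ge> 1"
    and kc: "\<forall>r>0. 32 * nqa_seq.kap Mb (r / C) - c \<le> nqa_seq.kap Ma r"
  shows "\<exists>D>0. \<forall>k. \<forall>r>0. r powr (real k + 1/2) * exp (- poissonP (omega_tilde Ma) 0 r / 2)
            \<le> D * C^k * nqa_seq.Kf Mb k"
proof -
  interpret a: nqa_seq Ma ma by (rule A)
  interpret b: nqa_seq Mb mb by (rule B)
  define l where "l = ln (Ma 16)"
  define D where "D = exp (c / 32 + l / 32)"
  have "\<forall>k. \<forall>r>0. r powr (real k + 1/2) * exp (- poissonP (omega_tilde Ma) 0 r / 2)
            \<le> D * C^k * b.Kf k"
  proof (intro allI impI)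
    fix k :: nat and r :: real assume r: "r > 0"
    have rC: "r / C > 0" using r C by simp
    have k0: "0 \<le> a.kap r" using r by (intro a.kap_nonneg) simp
    have "a.kap r / (2 * pi) \<le> a.P r" by (rule a.P_lower[OF r])
    moreover have "a.kap r / 8 \<le> a.kap r / (2 * pi)"
      using k0 pi_less_4 pi_gt3 by (intro divide_left_mono) auto
    ultimately have P1: "a.kap r / 8 \<le> a.P r" by linarith
    have "omega_M Ma r \<le> a.W r" using a.W_eq[of r] a.ot_ge_om r by simp
    also have "\<dots> \<le> a.kap r" by (rule a.W_le_kap[OF r])
    finally have "real 16 * ln r - l \<le> a.kap r" using a.om_lower'[OF r, of 16] unfolding l_def by linarith
    moreover have "32 * b.kap (r / C) - c \<le> a.kap r" using kc r by blast
    ultimately have E: "- a.P r / 2 \<le> - b.kap (r / C) + (c / 32 + l / 32) - ln r / 2"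
      using P1 by (simp add: field_simps)
    have sq: "exp (ln r / 2) = sqrt r"
      using r by (simp add: ln_sqrt[symmetric])
    have "exp (- a.P r / 2) \<le> exp (- b.kap (r / C) + (c / 32 + l / 32) - ln r / 2)"
      using E by simp
    also have "\<dots> = exp (- b.kap (r / C)) * D / sqrt r"
      unfolding D_def sq[symmetric] by (simp only: exp_add exp_diff)
    finally have e: "exp (- a.P r / 2) \<le> exp (- b.kap (r / C)) * D / sqrt r" .
    have "r powr (real k + 1/2) * exp (- a.P r / 2) \<le> (r^k * sqrt r) * (exp (- b.kap (r / C)) * D / sqrt r)"
      unfolding powr_half_split[OF r] using e r by (intro mult_left_mono) auto
    also have "\<dots> = D * C^k * ((r / C)^k * exp (- b.kap (r / C)))"
      using r C by (simp add: power_divide field_simps)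
    also have "\<dots> \<le> D * C^k * b.Kf k"
      using b.K_lower[OF rC, of k] C unfolding D_def by (intro mult_left_mono) auto
    finally show "r powr (real k + 1/2) * exp (- poissonP (omega_tilde Ma) 0 r / 2) \<le> D * C^k * b.Kf k"
      unfolding a.P_def .
  qed
  moreover have "D > 0" unfolding D_def by simp
  ultimately show ?thesis by blast
qed

lemma seq_of:
  assumes wm: "weight_matrix MM" and nq: "nonquasianalytic_matrix MM" and a: "\<alpha> > 0"
  shows "\<exists>\<mu>. nqa_seq (MM \<alpha>) \<mu>"
proof -
  have "weight_seq (MM \<alpha>)" using wm a unfolding weight_matrix_def by blast
  then obtain \<mu> where m: "\<mu> 0 = 1" "mono \<mu>" "filterlim \<mu> at_top sequentially"
      "\<forall>k. MM \<alpha> k = (\<Prod>i\<le>k. \<mu> i)"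
    unfolding weight_seq_def by blast
  have "summable (\<lambda>k. MM \<alpha> k / MM \<alpha> (Suc k))"
    using nq a unfolding nonquasianalytic_matrix_def nonquasianalytic_seq_def by blast
  then have "nqa_seq (MM \<alpha>) \<mu>" using m by unfold_locales auto
  then show ?thesis by blast
qed

lemma mg_iter:
  assumes wm: "weight_matrix MM" and nq: "nonquasianalytic_matrix MM"
    and rm: "R_moderate_growth MM" and a: "\<alpha> > 0"
  shows "\<exists>\<beta>>0. \<exists>C\<ge>1. \<forall>x\<ge>0. 2^n * omega_M (MM \<beta>) x \<le> omega_M (MM \<alpha>) (C * x)"
proof (induction n)
  case 0
  show ?case using a by (intro exI[of _ \<alpha>] conjI exI[of _ 1]) auto
next
  case (Suc n)
  then obtain \<beta> C where b: "\<beta> > 0" "C \<ge> 1" and H: "\<forall>x\<ge>0. 2^n * omega_M (MM \<beta>) x \<le> omega_M (MM \<alpha>) (C * x)"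
    by blast
  obtain \<beta>' C' where b': "\<beta>' > 0" "C' \<ge> 1" and mg: "\<forall>j k. MM \<beta> (j + k) \<le> C' ^ (j + k) * MM \<beta>' j * MM \<beta>' k"
    using rm b(1) unfolding R_moderate_growth_def by blast
  obtain m1 where A: "nqa_seq (MM \<beta>) m1" using seq_of[OF wm nq b(1)] by blast
  obtain m2 where B: "nqa_seq (MM \<beta>') m2" using seq_of[OF wm nq b'(1)] by blast
  have "\<forall>x\<ge>0. 2^(Suc n) * omega_M (MM \<beta>') x \<le> omega_M (MM \<alpha>) ((C * C') * x)"
  proof (intro allI impI)
    fix x :: real assume x: "x \<ge> 0"
    have "2 * omega_M (MM \<beta>') x \<le> omega_M (MM \<beta>) (C' * x)"
      using mg_step[OF A B b'(2) _ x] mg by blast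
    then have "2^n * (2 * omega_M (MM \<beta>') x) \<le> 2^n * omega_M (MM \<beta>) (C' * x)"
      by (intro mult_left_mono) auto
    also have "\<dots> \<le> omega_M (MM \<alpha>) (C * (C' * x))"
      using H b' x by (intro H[rule_format]) simp
    finally show "2^(Suc n) * omega_M (MM \<beta>') x \<le> omega_M (MM \<alpha>) ((C * C') * x)"
      by (simp add: mult.assoc)
  qed
  moreover have "1 * 1 \<le> C * C'" using b b' by (intro mult_mono) auto
  ultimately show ?case using b'(1) by (intro exI[of _ \<beta>'] conjI exI[of _ "C * C'"]) auto
qed

lemma Q_bound:
  assumes wm: "weight_matrix MM" and nq: "nonquasianalytic_matrix MM"
    and rm: "R_moderate_growth MM" and a: "\<alpha> > 0"
  shows "\<exists>\<beta>>0. \<exists>D>0. \<exists>C\<ge>1. \<forall>k. \<forall>r>0.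
     r powr (real k + 1/2) * exp (- poissonP (omega_tilde (MM \<alpha>)) 0 r / 2) \<le> D * C^k * K_family MM \<beta> k"
proof -
  obtain \<beta> C where b: "\<beta> > 0" "C \<ge> 1" and H: "\<forall>x\<ge>0. 2^6 * omega_M (MM \<beta>) x \<le> omega_M (MM \<alpha>) (C * x)"
    using mg_iter[OF wm nq rm a, of 6] by blast
  obtain m1 where A: "nqa_seq (MM \<alpha>) m1" using seq_of[OF wm nq a] by blast
  obtain m2 where B: "nqa_seq (MM \<beta>) m2" using seq_of[OF wm nq b(1)] by blast
  interpret x1: nqa_seq "MM \<alpha>" m1 by (rule A)
  interpret x2: nqa_seq "MM \<beta>" m2 by (rule B)
  obtain c0 where c0: "\<forall>x\<ge>0. 64 * ln (1 + x\<^sup>2) \<le> omega_M (MM \<alpha>) x + c0"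
    using x1.log_bound by blast
  have om: "\<forall>y\<ge>0. 64 * omega_M (MM \<beta>) y \<le> omega_M (MM \<alpha>) (C * y)" using H by simp
  have pw: "\<forall>x\<ge>0. 32 * x2.W (x / C) \<le> x1.W x + c0 / 2"
    using W_compare[OF A B b(2) c0 om] by blast
  have kc: "\<forall>r>0. 32 * x2.kap (r / C) - c0 / 2 \<le> x1.kap r"
    using kap_compare[OF A B b(2) pw] by blast
  obtain D where D: "D > 0" and QD: "\<forall>k. \<forall>r>0. r powr (real k + 1/2) * exp (- poissonP (omega_tilde (MM \<alpha>)) 0 r / 2)
            \<le> D * C^k * x2.Kf k"
    using Q_upper_cross[OF A B b(2) kc] by blast
  have "x2.Kf = K_family MM \<beta>" by (rule ext) (simp add: x2.Kf_def K_family_def)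
  then show ?thesis using b D QD by (intro exI[of _ \<beta>] conjI exI[of _ D] exI[of _ C]) auto
qed

theorem proposition3p4:
  fixes MM :: "real \<Rightarrow> nat \<Rightarrow> real"
  assumes "weight_matrix MM"
    and "nonquasianalytic_matrix MM"
    and "R_moderate_growth MM"
  shows "R_equivalent (K_family MM) (Q_family MM)"
proof -
  note wm = assms(1) and nq = assms(2) and rm = assms(3)
  have P1: "\<exists>\<beta>>0. seq_preceq (K_family MM \<alpha>) (Q_family MM \<beta>)" if a: "\<alpha> > 0" for \<alpha>
  proof -
    obtain m1 where A: "nqa_seq (MM \<alpha>) m1" using seq_of[OF wm nq a] by blast
    interpret x1: nqa_seq "MM \<alpha>" m1 by (rule A)
    obtain \<beta> D C where QB: "\<forall>k. \<forall>r>0.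
       r powr (real k + 1/2) * exp (- poissonP (omega_tilde (MM \<alpha>)) 0 r / 2) \<le> D * C^k * K_family MM \<beta> k"
      using Q_bound[OF wm nq rm a] by blast
    have bdd: "bdd_above ((\<lambda>r. r powr (real k + 1/2) * exp (- poissonP (omega_tilde (MM \<alpha>)) 0 r / 2)) ` {0<..})" for k
      using QB by (intro bdd_aboveI2[where M="D * C^k * K_family MM \<beta> k"]) auto
    have KF: "K_family MM \<alpha> = x1.Kf" by (rule ext) (simp add: x1.Kf_def K_family_def)
    have QF: "Q_family MM \<alpha> = x1.Qf" by (rule ext) (simp add: x1.Qf_def Q_family_def)
    define e where "e = exp (x1.kap 1)"
    have e1: "1 \<le> e" unfolding e_def using x1.kap_nonneg[of 1] by simp
    have "seq_preceq (K_family MM \<alpha>) (Q_family MM \<alpha>)"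
      unfolding seq_preceq_def KF QF
    proof (rule bdd_aboveI2[where M=e])
      fix k :: nat assume "k \<in> {1..}"
      then have k: "k \<ge> 1" by simp
      have Qp: "0 < x1.Qf k" by (rule x1.Q_pos[OF bdd])
      have Kp: "0 < x1.Kf k" using x1.K_ge1[of k] by simp
      have "x1.Kf k \<le> e * x1.Qf k" unfolding e_def by (rule x1.K_le_Q[OF bdd])
      then have r: "x1.Kf k / x1.Qf k \<le> e" using Qp by (simp add: divide_le_eq)
      have "(x1.Kf k / x1.Qf k) powr (1 / real k) \<le> e powr (1 / real k)"
        using r Qp Kp by (intro powr_mono2) auto
      also have "\<dots> \<le> e powr 1" using e1 k by (intro powr_mono) auto
      finally show "(x1.Kf k / x1.Qf k) powr (1 / real k) \<le> e" using e1 by simp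
    qed
    then show ?thesis using a by blast
  qed
  have P2: "\<exists>\<beta>>0. seq_preceq (Q_family MM \<alpha>) (K_family MM \<beta>)" if a: "\<alpha> > 0" for \<alpha>
  proof -
    obtain m1 where A: "nqa_seq (MM \<alpha>) m1" using seq_of[OF wm nq a] by blast
    interpret x1: nqa_seq "MM \<alpha>" m1 by (rule A)
    obtain \<beta> D C where b: "\<beta> > 0" and D: "D > 0" and C: "C \<ge> 1" and QB: "\<forall>k. \<forall>r>0.
       r powr (real k + 1/2) * exp (- poissonP (omega_tilde (MM \<alpha>)) 0 r / 2) \<le> D * C^k * K_family MM \<beta> k"
      using Q_bound[OF wm nq rm a] by blast
    obtain m2 where B: "nqa_seq (MM \<beta>) m2" using seq_of[OF wm nq b] by blast
    interpret x2: nqa_seq "MM \<beta>" m2 by (rule B)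
    have bdd: "bdd_above ((\<lambda>r. r powr (real k + 1/2) * exp (- poissonP (omega_tilde (MM \<alpha>)) 0 r / 2)) ` {0<..})" for k
      using QB by (intro bdd_aboveI2[where M="D * C^k * K_family MM \<beta> k"]) auto
    have KF: "K_family MM \<beta> = x2.Kf" by (rule ext) (simp add: x2.Kf_def K_family_def)
    have QF: "Q_family MM \<alpha> = x1.Qf" by (rule ext) (simp add: x1.Qf_def Q_family_def)
    define D' where "D' = max D 1"
    have D'1: "1 \<le> D'" unfolding D'_def by simp
    have "seq_preceq (Q_family MM \<alpha>) (K_family MM \<beta>)"
      unfolding seq_preceq_def KF QF
    proof (rule bdd_aboveI2[where M="D' * C"])
      fix k :: nat assume "k \<in> {1..}"
      then have k: "k \<ge> 1" by simp
      have Qp: "0 < x1.Qf k" by (rule x1.Q_pos[OF bdd])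
      have Kp: "0 < x2.Kf k" using x2.K_ge1[of k] by simp
      have "x1.Qf k \<le> D * C^k * x2.Kf k"
        unfolding x1.Qf_def using QB KF by (intro cSUP_least) auto
      also have "\<dots> \<le> D' * C^k * x2.Kf k"
        using Kp C unfolding D'_def by (intro mult_right_mono) auto
      finally have r: "x1.Qf k / x2.Kf k \<le> D' * C^k" using Kp by (simp add: divide_le_eq)
      have "(x1.Qf k / x2.Kf k) powr (1 / real k) \<le> (D' * C^k) powr (1 / real k)"
        using r Qp Kp by (intro powr_mono2) auto
      also have "\<dots> = D' powr (1 / real k) * (C^k) powr (1 / real k)"
        using D'1 C by (simp add: powr_mult)
      also have "(C^k) powr (1 / real k) = C"
      proof -
        have "(C^k) powr (1 / real k) = (C powr real k) powr (1 / real k)"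
          using C by (simp add: powr_realpow)
        also have "\<dots> = C" using k C by (simp add: powr_powr)
        finally show ?thesis .
      qed
      also have "D' powr (1 / real k) \<le> D' powr 1" using D'1 k by (intro powr_mono) auto
      finally show "(x1.Qf k / x2.Kf k) powr (1 / real k) \<le> D' * C" using D'1 C by simp
    qed
    then show ?thesis using b by blast
  qed
  show ?thesis unfolding R_equivalent_def using P1 P2 by blast
qed

end
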